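(* Let $N\ge 1$, let $u,v$ be coprime non-zero integers and let $m=\max\{|u|,|v|\}$. Then the number of solutions $(a_1,a_2,b_1,b_2)\in([-N,N]\cap\mathbb{Z})^4$ to $u(b_1-b_2)=v(a_1-a_2)$ is equal to \[ \frac{4N^3}{3m^3}\left(12m^2 - 6m(|u|+|v|)+ 4|uv|\right) + O(N^2), \] where the implied constant is absolute (independent of $u,v,N$). *)

theory Defs
  imports Complex_Main
begin

definition sol_count :: "nat \<Rightarrow> int \<Rightarrow> int \<Rightarrow> nat" where
  "sol_count N u v = card {(a1::int, a2::int, b1::int, b2::int).
      a1 \<in> {- int N..int N} \<and> a2 \<in> {- int N..int N} \<and>
      b1 \<in> {- int N..int N} \<and> b2 \<in> {- int N..int N} \<and>
      u * (b1 - b2) = v * (a1 - a2)}"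

end

theory Submission
  imports Defs
begin


lemma sym_sum:
  fixes L p q :: real
  shows "(\<Sum>t\<in>{- int n..int n}. (L - p * \<bar>real_of_int t\<bar>) * (L - q * \<bar>real_of_int t\<bar>))
    = L^2 + 2 * (real n * L^2 - L * (p+q) * real n * (real n + 1) / 2
        + p * q * real n * (real n + 1) * (2 * real n + 1) / 6)"
proof (induction n)
  case 0
  then show ?case by (simp add: power2_eq_square)
next
  case (Suc n)
  have e: "{- int (Suc n)..int (Suc n)} = insert (- int (Suc n)) (insert (int (Suc n)) {- int n..int n})"
    by auto
  let ?f = "\<lambda>t. (L - p * \<bar>real_of_int t\<bar>) * (L - q * \<bar>real_of_int t\<bar>)"
  have "sum ?f {- int (Suc n)..int (Suc n)} = ?f (- int (Suc n)) + ?f (int (Suc n)) + sum ?f {- int n..int n}"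
    unfolding e by (subst sum.insert; auto)+
  also have "\<dots> = 2 * ((L - p * (real n + 1)) * (L - q * (real n + 1))) + sum ?f {- int n..int n}"
    by (simp add: add.commute)
  finally have X: "sum ?f {- int (Suc n)..int (Suc n)} = 2 * ((L - p * (real n + 1)) * (L - q * (real n + 1))) + sum ?f {- int n..int n}" .
  show ?case by (subst X, subst Suc.IH) (simp add: field_simps power2_eq_square)
qed

lemma bnd3:
  fixes x :: real and n :: nat
  assumes "real n \<le> x" "x < real n + 1"
  shows "\<bar>real n * (real n + 1) * (2 * real n + 1) / 6 - x^3/3\<bar> \<le> x^2"
proof -
  have n0: "real n \<le> real n ^ 2" by (cases n) (auto simp: power2_eq_square)
  have up: "real n * (real n + 1) * (2 * real n + 1) / 6 - x^3/3 \<le> x^2"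
  proof -
    have "x^3 \<ge> real n ^ 3" using assms by (simp add: power_mono)
    moreover have "real n ^ 2 \<le> x^2" using assms by (simp add: power_mono)
    ultimately show ?thesis using n0 by (simp add: algebra_simps power2_eq_square power3_eq_cube)
  qed
  have lo: "x^3/3 - real n * (real n + 1) * (2 * real n + 1) / 6 \<le> x^2"
  proof -
    have a: "x^3 - real n ^3 = (x - real n) * (x^2 + x * real n + real n ^ 2)"
      by (simp add: algebra_simps power2_eq_square power3_eq_cube)
    have b: "x^2 + x * real n + real n ^ 2 \<le> 3 * x^2"
      using assms by (smt (verit) mult_left_mono power_mono of_nat_0_le_iff power2_eq_square)
    have c: "(x - real n) * (x^2 + x * real n + real n ^ 2) \<le> 1 * (3 * x^2)"
      apply (rule mult_mono) using assms b by auto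
    have d: "real n ^ 3 * 2 \<le> real n * (real n + 1) * (2 * real n + 1)"
      by (simp add: algebra_simps power2_eq_square power3_eq_cube)
    show ?thesis using a c d by simp
  qed
  show ?thesis using up lo by linarith
qed

lemma bnd2:
  fixes x :: real and n :: nat
  assumes "real n \<le> x" "x < real n + 1"
  shows "\<bar>real n * (real n + 1) - x^2\<bar> \<le> x"
proof -
  have "real n * (real n + 1) \<le> x * (x + 1)" using assms by (intro mult_mono) auto
  moreover have "real n * x \<le> real n * (real n + 1)" using assms by (intro mult_left_mono) auto
  moreover have "x * (real n - x) \<ge> x * (-1)" using assms by (intro mult_left_mono) auto
  ultimately show ?thesis by (simp add: algebra_simps power2_eq_square)
qed

lemma main_arith:
  fixes m p q x :: real and n :: nat
  assumes m1: "m \<ge> 1" and p: "0 \<le> p" "p \<le> m" and q: "0 \<le> q" "q \<le> m"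
    and nx: "real n \<le> x" "x < real n + 1" and M1: "m * x \<ge> 1"
  shows "\<bar>(m*x+1)^2 + 2 * (real n * (m*x+1)^2 - (m*x+1) * (p+q) * real n * (real n + 1) / 2
        + p * q * real n * (real n + 1) * (2 * real n + 1) / 6)
     - (2*m^2*x^3 - m*(p+q)*x^3 + 2*p*q*x^3/3)\<bar> \<le> 20 * (m*x)^2"
proof -
  define M where "M = m * x"
  have x0: "x \<ge> 0" using nx by (meson of_nat_0_le_iff order_trans)
  have xM: "x \<le> M" unfolding M_def using m1 x0 by (simp add: mult_le_cancel_right1)
  have M1': "M \<ge> 1" using M1 M_def by simp
  define T1 where "T1 = real n * (M+1)^2 - m^2*x^3"
  define T2 where "T2 = (p+q)/2 * ((M+1) * (real n * (real n + 1)) - m*x^3)"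
  define T3 where "T3 = p*q * (real n * (real n + 1) * (2 * real n + 1) / 6 - x^3/3)"
  have ident: "(m*x+1)^2 + 2 * (real n * (m*x+1)^2 - (m*x+1) * (p+q) * real n * (real n + 1) / 2
        + p * q * real n * (real n + 1) * (2 * real n + 1) / 6)
     - (2*m^2*x^3 - m*(p+q)*x^3 + 2*p*q*x^3/3) = (M+1)^2 + 2*T1 - 2*T2 + 2*T3"
    unfolding T1_def T2_def T3_def M_def by (simp add: field_simps power2_eq_square power3_eq_cube)
  have T1e: "T1 = (real n - x) * M^2 + real n * (2*M+1)"
    unfolding T1_def M_def by (simp add: field_simps power2_eq_square power3_eq_cube)
  have a1: "\<bar>(real n - x) * M^2\<bar> \<le> M^2"
  proof -
    have "\<bar>real n - x\<bar> * M^2 \<le> 1 * M^2" using nx by (intro mult_right_mono) auto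
    then show ?thesis by (simp add: abs_mult)
  qed
  have a2: "real n * (2*M+1) \<le> M * (2*M+1)" using nx xM M1' by (intro mult_right_mono) auto
  have a3: "M * (2*M+1) \<le> 3 * M^2" using M1' by (simp add: power2_eq_square algebra_simps)
  have T1b: "\<bar>T1\<bar> \<le> 4 * M^2" using T1e a1 a2 a3 by (smt (verit) of_nat_0_le_iff M1' mult_nonneg_nonneg)
  have T2e: "(M+1) * (real n * (real n + 1)) - m*x^3 = M * (real n * (real n + 1) - x^2) + real n * (real n + 1)"
    unfolding M_def by (simp add: field_simps power2_eq_square power3_eq_cube)
  have b1: "\<bar>real n * (real n + 1) - x^2\<bar> \<le> x" using bnd2 nx by blast
  have b2: "\<bar>M * (real n * (real n + 1) - x^2)\<bar> \<le> M * x"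
    using b1 M1' by (simp add: abs_mult)
  have b3: "real n * (real n + 1) \<le> x * (x+1)" using nx by (intro mult_mono) auto
  have b4: "\<bar>(M+1) * (real n * (real n + 1)) - m*x^3\<bar> \<le> M * x + x * (x+1)"
    using T2e b2 b3 by (smt (verit) of_nat_0_le_iff mult_nonneg_nonneg)
  have b5: "\<bar>(p+q)/2\<bar> \<le> m" using p q by simp
  have b6: "\<bar>T2\<bar> \<le> m * (M * x + x * (x+1))"
    unfolding T2_def abs_mult using b4 b5 by (intro mult_mono) auto
  have b7: "m * (M * x + x * (x+1)) = M^2 + M * (x+1)" unfolding M_def by (simp add: algebra_simps power2_eq_square)
  have b8: "M * (x+1) \<le> M * (M+1)" using xM M1' by (intro mult_left_mono) auto
  have b9: "M \<le> M * M" using M1' by simp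
  have T2b: "\<bar>T2\<bar> \<le> 3 * M^2" using b6 b7 b8 b9 by (simp add: power2_eq_square algebra_simps)
  have c1: "\<bar>real n * (real n + 1) * (2 * real n + 1) / 6 - x^3/3\<bar> \<le> x^2" using bnd3 nx by blast
  have c2: "\<bar>p*q\<bar> \<le> m^2" using p q by (simp add: abs_mult power2_eq_square mult_mono)
  have T3b: "\<bar>T3\<bar> \<le> m^2 * x^2" unfolding T3_def abs_mult using c1 c2 by (intro mult_mono) auto
  have T3b': "\<bar>T3\<bar> \<le> M^2" using T3b unfolding M_def by (simp add: power_mult_distrib)
  have d0: "(M+1)^2 = M*M + 2*M + 1" "M^2 = M*M" by (simp_all add: power2_eq_square algebra_simps)
  have d: "(M+1)^2 \<le> 4 * M^2" unfolding d0 using M1' b9 by linarith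
  have "\<bar>(M+1)^2 + 2*T1 - 2*T2 + 2*T3\<bar> \<le> 20 * M^2"
    using T1b T2b T3b' d zero_le_power2[of "M+1"] unfolding abs_le_iff by linarith
  then show ?thesis using ident M_def by simp
qed

definition Dset :: "nat \<Rightarrow> int \<Rightarrow> (int \<times> int) set" where
  "Dset N d = {(a1,a2). a1 \<in> {- int N..int N} \<and> a2 \<in> {- int N..int N} \<and> a1 - a2 = d}"

lemma Dset_finite: "finite (Dset N d)"
proof -
  have "Dset N d \<subseteq> {- int N..int N} \<times> {- int N..int N}" unfolding Dset_def by auto
  then show ?thesis by (rule finite_subset) auto
qed

lemma card_Dset:
  assumes "\<bar>d\<bar> \<le> 2 * int N"
  shows "card (Dset N d) = nat (2 * int N + 1 - \<bar>d\<bar>)"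
proof -
  have e: "Dset N d = (\<lambda>a. (a+d, a)) ` {max (- int N) (- int N - d) .. min (int N) (int N - d)}"
    unfolding Dset_def by (auto simp: image_iff)
  have i: "inj_on (\<lambda>a::int. (a+d, a)) A" for A by (auto simp: inj_on_def)
  have "card (Dset N d) = nat (min (int N) (int N - d) - max (- int N) (- int N - d) + 1)"
    unfolding e by (simp add: card_image[OF i])
  also have "\<dots> = nat (2 * int N + 1 - \<bar>d\<bar>)" by (auto simp: max_def min_def abs_if)
  finally show ?thesis .
qed

definition Sset :: "nat \<Rightarrow> int \<Rightarrow> int \<Rightarrow> int \<Rightarrow> (int \<times> int \<times> int \<times> int) set" where
  "Sset N u v t = {(a1,a2,b1,b2). (a1,a2) \<in> Dset N (u*t) \<and> (b1,b2) \<in> Dset N (v*t)}"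

lemma Sset_img: "Sset N u v t = (\<lambda>((a1,a2),(b1,b2)). (a1,a2,b1,b2)) ` (Dset N (u*t) \<times> Dset N (v*t))"
  unfolding Sset_def by (auto simp: image_iff) force

lemma card_Sset: "card (Sset N u v t) = card (Dset N (u*t)) * card (Dset N (v*t))"
proof -
  have i: "inj_on (\<lambda>((a1::int,a2::int),(b1::int,b2::int)). (a1,a2,b1,b2)) A" for A
    by (auto simp: inj_on_def)
  show ?thesis unfolding Sset_img by (simp add: card_image[OF i] card_cartesian_product)
qed

lemma Sset_finite: "finite (Sset N u v t)"
  unfolding Sset_img using Dset_finite by auto

lemma set_eq:
  assumes u: "u \<noteq> 0" and v: "v \<noteq> 0" and cop: "coprime u v"
  shows "{(a1::int, a2::int, b1::int, b2::int).
      a1 \<in> {- int N..int N} \<and> a2 \<in> {- int N..int N} \<and>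
      b1 \<in> {- int N..int N} \<and> b2 \<in> {- int N..int N} \<and>
      u * (b1 - b2) = v * (a1 - a2)}
    = (\<Union>t\<in>{- (2 * int N div max \<bar>u\<bar> \<bar>v\<bar>)..2 * int N div max \<bar>u\<bar> \<bar>v\<bar>}. Sset N u v t)"
  (is "?A = ?B")
proof
  show "?A \<subseteq> ?B"
  proof (clarify)
    fix a1 a2 b1 b2 :: int
    assume h: "a1 \<in> {- int N..int N}" "a2 \<in> {- int N..int N}" "b1 \<in> {- int N..int N}"
      "b2 \<in> {- int N..int N}" "u * (b1 - b2) = v * (a1 - a2)"
    have "u dvd v * (a1 - a2)" using h(5) by (metis dvd_triv_left)
    then have "u dvd (a1 - a2)" using cop by (simp add: coprime_dvd_mult_right_iff)
    then obtain t where t: "a1 - a2 = u * t" by (auto elim: dvdE)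
    have tb: "b1 - b2 = v * t" using h(5) t u by (metis mult.left_commute mult_cancel_left)
    have "\<bar>a1 - a2\<bar> \<le> 2 * int N" "\<bar>b1 - b2\<bar> \<le> 2 * int N" using h(1-4) by auto
    then have ut: "\<bar>u\<bar> * \<bar>t\<bar> \<le> 2 * int N" and vt: "\<bar>v\<bar> * \<bar>t\<bar> \<le> 2 * int N"
      unfolding t tb by (simp_all add: abs_mult)
    have "max \<bar>u\<bar> \<bar>v\<bar> * \<bar>t\<bar> \<le> 2 * int N" using ut vt by (simp add: max_def)
    moreover have "max \<bar>u\<bar> \<bar>v\<bar> > 0" using u by simp
    ultimately have "\<bar>t\<bar> \<le> 2 * int N div max \<bar>u\<bar> \<bar>v\<bar>"
      by (metis mult.commute zdiv_mono1 nonzero_mult_div_cancel_right less_irrefl)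
    then have "t \<in> {- (2 * int N div max \<bar>u\<bar> \<bar>v\<bar>)..2 * int N div max \<bar>u\<bar> \<bar>v\<bar>}" by auto
    moreover have "(a1,a2,b1,b2) \<in> Sset N u v t" unfolding Sset_def Dset_def using h t tb by auto
    ultimately show "(a1,a2,b1,b2) \<in> ?B" by blast
  qed
  show "?B \<subseteq> ?A" unfolding Sset_def Dset_def by auto
qed

lemma disj: "u \<noteq> 0 \<Longrightarrow> s \<noteq> t \<Longrightarrow> Sset N u v s \<inter> Sset N u v t = {}"
  unfolding Sset_def Dset_def by auto


theorem lemma2p2:
  shows "\<exists>C::real. \<forall>(N::nat) (u::int) (v::int).
    N \<ge> 1 \<longrightarrow> u \<noteq> 0 \<longrightarrow> v \<noteq> 0 \<longrightarrow> coprime u v \<longrightarrow>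
    (let m = real_of_int (max \<bar>u\<bar> \<bar>v\<bar>) in
      \<bar>real (sol_count N u v)
        - 4 * real N ^ 3 / (3 * m ^ 3)
          * (12 * m ^ 2 - 6 * m * real_of_int (\<bar>u\<bar> + \<bar>v\<bar>) + 4 * real_of_int \<bar>u * v\<bar>)\<bar>
      \<le> C * real N ^ 2)"
proof (intro exI[of _ 80] allI impI)
  fix N :: nat and u v :: int
  assume N1: "N \<ge> 1" and u: "u \<noteq> 0" and v: "v \<noteq> 0" and cop: "coprime u v"
  define mi where "mi = max \<bar>u\<bar> \<bar>v\<bar>"
  define T where "T = 2 * int N div mi"
  have mi0: "mi \<ge> 1" unfolding mi_def using u by linarith
  have T0: "T \<ge> 0" unfolding T_def using mi0 by (simp add: pos_imp_zdiv_nonneg_iff)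
  define n where "n = nat T"
  have Tn: "T = int n" unfolding n_def using T0 by simp
  have mT: "mi * T \<le> 2 * int N"
  proof -
    have "2 * int N = mi * T + (2 * int N) mod mi" unfolding T_def by simp
    moreover have "(2 * int N) mod mi \<ge> 0" using mi0 by simp
    ultimately show ?thesis by linarith
  qed
  define L :: real where "L = 2 * real N + 1"
  have card_eq: "sol_count N u v = (\<Sum>t\<in>{-T..T}. card (Sset N u v t))"
    unfolding sol_count_def set_eq[OF u v cop] T_def[symmetric] mi_def[symmetric]
    by (rule card_UN_disjoint) (auto simp: Sset_finite disj[OF u])
  have term_eq: "real (card (Sset N u v t)) = (L - real_of_int \<bar>u\<bar> * \<bar>real_of_int t\<bar>) * (L - real_of_int \<bar>v\<bar> * \<bar>real_of_int t\<bar>)"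
    if t: "t \<in> {-T..T}" for t
  proof -
    have at: "\<bar>t\<bar> \<le> T" using t by auto
    have "mi * \<bar>t\<bar> \<le> mi * T" using at mi0 by (intro mult_left_mono) auto
    then have mt: "mi * \<bar>t\<bar> \<le> 2 * int N" using mT by linarith
    have "\<bar>u\<bar> * \<bar>t\<bar> \<le> mi * \<bar>t\<bar>" "\<bar>v\<bar> * \<bar>t\<bar> \<le> mi * \<bar>t\<bar>" unfolding mi_def by (auto intro: mult_right_mono)
    then have a: "\<bar>u * t\<bar> \<le> 2 * int N" "\<bar>v * t\<bar> \<le> 2 * int N" using mt by (auto simp: abs_mult)
    have "real (card (Sset N u v t)) = real (nat (2 * int N + 1 - \<bar>u * t\<bar>)) * real (nat (2 * int N + 1 - \<bar>v * t\<bar>))"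
      by (simp add: card_Sset card_Dset[OF a(1)] card_Dset[OF a(2)])
    also have "\<dots> = (L - real_of_int \<bar>u\<bar> * \<bar>real_of_int t\<bar>) * (L - real_of_int \<bar>v\<bar> * \<bar>real_of_int t\<bar>)"
      using a unfolding L_def by (simp add: abs_mult)
    finally show ?thesis .
  qed
  have real_eq: "real (sol_count N u v) = (\<Sum>t\<in>{- int n..int n}. (L - real_of_int \<bar>u\<bar> * \<bar>real_of_int t\<bar>) * (L - real_of_int \<bar>v\<bar> * \<bar>real_of_int t\<bar>))"
    unfolding card_eq of_nat_sum Tn[symmetric] using term_eq by (rule sum.cong[OF refl])
  define m :: real where "m = real_of_int mi"
  define p :: real where "p = real_of_int \<bar>u\<bar>"
  define q :: real where "q = real_of_int \<bar>v\<bar>"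
  define x :: real where "x = 2 * real N / m"
  have m1: "m \<ge> 1" using mi0 unfolding m_def by simp
  have Mx: "m * x = 2 * real N" unfolding x_def using m1 by simp
  have fl: "floor x = T" unfolding x_def m_def T_def
    using floor_divide_of_int_eq[of "2 * int N" mi] by simp
  have nx: "real n \<le> x" "x < real n + 1" using fl Tn by linarith+
  have pq: "0 \<le> p" "p \<le> m" "0 \<le> q" "q \<le> m" unfolding p_def q_def m_def mi_def by auto
  have M1: "m * x \<ge> 1" using Mx N1 by simp
  note A = main_arith[OF m1 pq nx M1]
  have L': "L = m * x + 1" unfolding L_def Mx by simp
  have S: "real (sol_count N u v) = (m*x+1)^2 + 2 * (real n * (m*x+1)^2 - (m*x+1) * (p+q) * real n * (real n + 1) / 2
        + p * q * real n * (real n + 1) * (2 * real n + 1) / 6)"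
    unfolding real_eq sym_sum L' p_def q_def by simp
  have E: "4 * real N ^ 3 / (3 * m ^ 3) * (12 * m ^ 2 - 6 * m * real_of_int (\<bar>u\<bar> + \<bar>v\<bar>) + 4 * real_of_int \<bar>u * v\<bar>)
     = 2*m^2*x^3 - m*(p+q)*x^3 + 2*p*q*x^3/3"
    unfolding x_def p_def q_def using m1 by (simp add: field_simps power3_eq_cube power2_eq_square abs_mult)
  have "20 * (m*x)^2 = 80 * real N ^ 2" unfolding Mx by (simp add: power2_eq_square)
  then show "let m = real_of_int (max \<bar>u\<bar> \<bar>v\<bar>) in
      \<bar>real (sol_count N u v)
        - 4 * real N ^ 3 / (3 * m ^ 3)
          * (12 * m ^ 2 - 6 * m * real_of_int (\<bar>u\<bar> + \<bar>v\<bar>) + 4 * real_of_int \<bar>u * v\<bar>)\<bar>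
      \<le> 80 * real N ^ 2"
    using A unfolding Let_def m_def[symmetric] mi_def[symmetric] S E by simp
qed

end
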